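(* Let $(\mathbb{X},\oplus,\otimes,\mathbb{0},\mathbb{1})$ be a linearly ordered, algebraically complete idempotent semifield, and let $\bm{A}_1,\ldots,\bm{A}_m\in\mathbb{X}^{n\times n}$ be reciprocal matrices (i.e. $\bm{A}_i^{-}=\bm{A}_i$) such that $\bm{B}=\bm{A}_1\oplus\cdots\oplus\bm{A}_m$ has no zero entries. Let $\mu$ be the spectral radius of $\bm{B}$ and $\bm{B}_{\mu}=\mu^{-1}\bm{B}$. Consider the problem of minimizing $\max_{1\le i\le m} d(\bm{A}_i,\bm{x}\bm{x}^{-})$ (i.e. $\bigoplus_{i=1}^m d(\bm{A}_i,\bm{x}\bm{x}^{-})$) over all regular vectors $\bm{x}\in\mathbb{X}^n$. Then the minimum value equals $\mu$, and the set of all solutions is $\{\bm{x}=\bm{B}_{\mu}^{\ast}\bm{u}:\bm{u}\in\mathbb{X}^n,\ \bm{u}\ne\bm{0}\}$.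
   Context: An idempotent semifield is a set $\mathbb{X}$ with associative, commutative operations $\oplus$ (addition) and $\otimes$ (multiplication, usually omitted in writing) with neutral elements $\mathbb{0}$ and $\mathbb{1}$, multiplication distributing over addition, idempotent addition ($x\oplus x=x$), and every nonzero $x$ having an inverse $x^{-1}$ with $xx^{-1}=\mathbb{1}$. It is assumed linearly ordered by the order $x\le y \iff x\oplus y=y$, and algebraically complete: $x^p=a$ is solvable for every $a$ and integer $p>0$, so rational powers are defined. Matrix and vector operations use the usual formulas with $\oplus,\otimes$ in place of $+,\times$; $\bm{0}$ is the zero vector; a vector is regular if it has no zero entries. For a nonzero column vector $\bm{x}=(x_i)$, $\bm{x}^{-}$ is the row vector with entries $x_i^{-1}$ if $x_i\ne\mathbb{0}$ and $\mathbb{0}$ otherwise. For a nonzero matrix $\bm{A}=(a_{ij})$, $\bm{A}^{-}=(a^{-}_{ij})$ with $a^{-}_{ij}=a_{ji}^{-1}$ if $a_{ji}\neq\mathbb{0}$ and $\mathbb{0}$ otherwise. The trace is $\mathrm{tr}\,\bm{A}=a_{11}\oplus\cdots\oplus a_{nn}$. The distance between square matrices is $d(\bm{A},\bm{B})=\mathrm{tr}(\bm{B}^{-}\bm{A})\oplus\mathrm{tr}(\bm{A}^{-}\bm{B})$. $\bm{I}$ is the identity matrix, $\bm{A}^0=\bm{I}$, $\bm{A}^p=\bm{A}^{p-1}\bm{A}$. The spectral radius of $\bm{A}$ of order $n$ is $\lambda=\bigoplus_{k=1}^{n}\bigoplus_{1\le i_1,\ldots,i_k\le n}(a_{i_1i_2}a_{i_2i_3}\cdots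 a_{i_ki_1})^{1/k}$. For a square matrix $\bm{M}$ of order $n$, $\bm{M}^{\ast}=\bm{I}\oplus\bm{M}\oplus\cdots\oplus\bm{M}^{n-1}$. *)

theory Defs
  imports Main
begin

text \<open>Addition is the semifield addition (oplus), multiplication is otimes,
  0 and 1 are the neutral elements; the order is the one induced by addition.\<close>

class idem_semifield = comm_semiring_1 + linorder + inverse +
  assumes add_idem: "x + x = x"
  assumes le_iff_add: "x \<le> y \<longleftrightarrow> x + y = y"
  assumes mult_inverse_nz: "x \<noteq> 0 \<Longrightarrow> x * inverse x = 1"
  assumes alg_complete: "0 < p \<Longrightarrow> \<exists>x. x ^ p = a"

text \<open>The (unique) k-th root, giving rational powers a^(1/k).\<close>
definition iroot :: "nat \<Rightarrow> 'a::idem_semifield \<Rightarrow> 'a" where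
  "iroot k a = (THE x. x ^ k = a)"

type_synonym ('a, 'n) mat = "'n \<Rightarrow> 'n \<Rightarrow> 'a"
type_synonym ('a, 'n) vect = "'n \<Rightarrow> 'a"

definition mmult :: "('a::idem_semifield, 'n::finite) mat \<Rightarrow> ('a, 'n) mat \<Rightarrow> ('a, 'n) mat" where
  "mmult A B = (\<lambda>i j. \<Sum>k\<in>UNIV. A i k * B k j)"

definition mvmult :: "('a::idem_semifield, 'n::finite) mat \<Rightarrow> ('a, 'n) vect \<Rightarrow> ('a, 'n) vect" where
  "mvmult A x = (\<lambda>i. \<Sum>k\<in>UNIV. A i k * x k)"

definition madd :: "('a::idem_semifield, 'n::finite) mat \<Rightarrow> ('a, 'n) mat \<Rightarrow> ('a, 'n) mat" where
  "madd A B = (\<lambda>i j. A i j + B i j)"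

definition smult :: "'a::idem_semifield \<Rightarrow> ('a, 'n::finite) mat \<Rightarrow> ('a, 'n) mat" where
  "smult c A = (\<lambda>i j. c * A i j)"

definition idm :: "('a::idem_semifield, 'n::finite) mat" where
  "idm = (\<lambda>i j. if i = j then 1 else 0)"

primrec mpow :: "('a::idem_semifield, 'n::finite) mat \<Rightarrow> nat \<Rightarrow> ('a, 'n) mat" where
  "mpow A 0 = idm"
| "mpow A (Suc p) = mmult (mpow A p) A"

definition trace :: "('a::idem_semifield, 'n::finite) mat \<Rightarrow> 'a" where
  "trace A = (\<Sum>i\<in>UNIV. A i i)"

definition mconj :: "('a::idem_semifield, 'n::finite) mat \<Rightarrow> ('a, 'n) mat" where
  "mconj A = (\<lambda>i j. if A j i = 0 then 0 else inverse (A j i))"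

definition vconj :: "('a::idem_semifield, 'n::finite) vect \<Rightarrow> ('a, 'n) vect" where
  "vconj x = (\<lambda>i. if x i = 0 then 0 else inverse (x i))"

definition outer_conj :: "('a::idem_semifield, 'n::finite) vect \<Rightarrow> ('a, 'n) mat" where
  "outer_conj x = (\<lambda>i j. x i * vconj x j)"

definition dist_mat :: "('a::idem_semifield, 'n::finite) mat \<Rightarrow> ('a, 'n) mat \<Rightarrow> 'a" where
  "dist_mat A B = trace (mmult (mconj B) A) + trace (mmult (mconj A) B)"

definition regular :: "('a::idem_semifield, 'n::finite) vect \<Rightarrow> bool" where
  "regular x \<longleftrightarrow> (\<forall>i. x i \<noteq> 0)"

definition spec_rad :: "('a::idem_semifield, 'n::finite) mat \<Rightarrow> 'a" where
  "spec_rad A = (\<Sum>k\<in>{1..card (UNIV :: 'n set)}. \<Sum>cs\<in>{cs. length cs = k}.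
      iroot k (\<Prod>j<k. A (cs ! j) (cs ! ((j + 1) mod k))))"

definition kstar :: "('a::idem_semifield, 'n::finite) mat \<Rightarrow> ('a, 'n) mat" where
  "kstar M = (\<lambda>i j. \<Sum>p<card (UNIV :: 'n set). mpow M p i j)"

end

theory Submission
  imports Defs
begin

lemma add_max: "(x::'a::idem_semifield) + y = max x y"
proof (cases "x \<le> y")
  case True then have "x + y = y" using idem_semifield_class.le_iff_add[of x y] by blast
  then show ?thesis using True by (simp add: max_def)
next
  case False then have "y \<le> x" by simp
  then have "y + x = x" using idem_semifield_class.le_iff_add[of y x] by blast
  then show ?thesis using False by (simp add: max_def add.commute)
qed


lemma zero_least: "0 \<le> (x::'a::idem_semifield)"
  using idem_semifield_class.le_iff_add[of 0 x] by simp


lemma le_zero_iff': "(x::'a::idem_semifield) \<le> 0 \<longleftrightarrow> x = 0"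
  using zero_least[of x] by auto


lemma add_le_iff: "(x::'a::idem_semifield) + y \<le> t \<longleftrightarrow> x \<le> t \<and> y \<le> t"
  by (simp add: add_max)

lemma sum_le_iff: "finite S \<Longrightarrow> (sum f S \<le> (t::'a::idem_semifield) \<longleftrightarrow> (\<forall>s\<in>S. f s \<le> t))"
  by (induction S rule: finite_induct) (auto simp: add_le_iff zero_least)

lemma member_le_sum': "finite S \<Longrightarrow> s \<in> S \<Longrightarrow> (f s::'a::idem_semifield) \<le> sum f S"
  using sum_le_iff[of S f "sum f S"] by auto

lemma sum_attained: "finite S \<Longrightarrow> S \<noteq> {} \<Longrightarrow> \<exists>s\<in>S. sum f S = (f s::'a::idem_semifield)"
proof (induction S rule: finite_ne_induct)
  case (singleton x) then show ?case by simp
next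
  case (insert x F)
  then show ?case by (auto simp: add_max max_def)
qed

lemma mult_mono_l: "(x::'a::idem_semifield) \<le> y \<Longrightarrow> c * x \<le> c * y"
proof -
  assume "x \<le> y"
  then have "x + y = y" using idem_semifield_class.le_iff_add[of x y] by blast
  then have "c * x + c * y = c * y" by (metis distrib_left)
  then show ?thesis using idem_semifield_class.le_iff_add[of "c*x" "c*y"] by blast
qed


lemma mult_mono_r: "(x::'a::idem_semifield) \<le> y \<Longrightarrow> x * c \<le> y * c"
  using mult_mono_l[of x y c] by (simp add: mult.commute)

lemma mult_mono2: "(a::'a::idem_semifield) \<le> b \<Longrightarrow> c \<le> d \<Longrightarrow> a * c \<le> b * d"
  using mult_mono_l[of c d a] mult_mono_r[of a b d] by (rule order_trans)


lemma inverse_nz: "(x::'a::idem_semifield) \<noteq> 0 \<Longrightarrow> inverse x \<noteq> 0"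
  using idem_semifield_class.mult_inverse_nz[of x] by auto


lemma inv_mult_nz: "(x::'a::idem_semifield) \<noteq> 0 \<Longrightarrow> inverse x * x = 1"
  using idem_semifield_class.mult_inverse_nz by (simp add: mult.commute)

lemma nz_mult: "(x::'a::idem_semifield) \<noteq> 0 \<Longrightarrow> y \<noteq> 0 \<Longrightarrow> x * y \<noteq> 0"
proof
  assume x: "x \<noteq> 0" and y: "y \<noteq> 0" and xy: "x * y = 0"
  have "y = (inverse x * x) * y" using inv_mult_nz[OF x] by simp
  also have "\<dots> = inverse x * (x * y)" by (simp add: mult.assoc)
  finally show False using xy y by simp
qed


lemma mult_le_cancel: "(c::'a::idem_semifield) \<noteq> 0 \<Longrightarrow> c * x \<le> c * y \<longleftrightarrow> x \<le> y"
proof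
  assume c: "c \<noteq> 0" and h: "c * x \<le> c * y"
  have "inverse c * (c * x) \<le> inverse c * (c * y)" using h by (rule mult_mono_l)
  then show "x \<le> y" by (simp add: mult.assoc[symmetric] inv_mult_nz[OF c])
qed (rule mult_mono_l)


lemma inverse_unique: "(a::'a::idem_semifield) * y = 1 \<Longrightarrow> y = inverse a"
proof -
  assume h: "a * y = 1"
  then have a: "a \<noteq> 0" by auto
  have "y = (inverse a * a) * y" using inv_mult_nz[OF a] by simp
  also have "\<dots> = inverse a * (a * y)" by (simp add: mult.assoc)
  finally show ?thesis using h by simp
qed


lemma inverse_mult: "(a::'a::idem_semifield) \<noteq> 0 \<Longrightarrow> b \<noteq> 0 \<Longrightarrow> inverse (a * b) = inverse a * inverse b"
proof -
  assume a: "a \<noteq> 0" and b: "b \<noteq> 0"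
  have "(a * b) * (inverse a * inverse b) = (a * inverse a) * (b * inverse b)"
    by (simp add: ac_simps)
  also have "\<dots> = 1" using a b idem_semifield_class.mult_inverse_nz[of a] idem_semifield_class.mult_inverse_nz[of b] by simp
  finally show ?thesis using inverse_unique by metis
qed

lemma inverse_inverse': "(a::'a::idem_semifield) \<noteq> 0 \<Longrightarrow> inverse (inverse a) = a"
  using inv_mult_nz inverse_unique by metis


lemma power_nz: "(x::'a::idem_semifield) \<noteq> 0 \<Longrightarrow> x ^ k \<noteq> 0"
  by (induction k) (auto simp: nz_mult)

lemma power_mono': "(x::'a::idem_semifield) \<le> y \<Longrightarrow> x ^ k \<le> y ^ k"
  by (induction k) (auto simp: mult_mono2)

lemma power_strict: "(x::'a::idem_semifield) < y \<Longrightarrow> 0 < k \<Longrightarrow> x ^ k < y ^ k"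
proof (induction k)
  case 0 then show ?case by simp
next
  case (Suc k)
  show ?case
  proof (cases "x = 0")
    case True
    then have "y \<noteq> 0" using Suc by auto
    then have "y ^ Suc k \<noteq> 0" by (rule power_nz)
    moreover have "x ^ Suc k = 0" using True by simp
    ultimately show ?thesis using zero_least[of "y ^ Suc k"] by (simp add: order_less_le)
  next
    case False
    have c: "x ^ k \<noteq> 0" using False by (rule power_nz)
    have xy: "x \<le> y" using Suc.prems by simp
    have a: "x ^ k \<le> y ^ k" using xy by (rule power_mono')
    have ne: "x * x ^ k \<noteq> y * x ^ k"
    proof
      assume "x * x ^ k = y * x ^ k"
      then have "x ^ k * x \<le> x ^ k * y" "x ^ k * y \<le> x ^ k * x" by (simp_all add: mult.commute)
      then have "x \<le> y" "y \<le> x" using mult_le_cancel[OF c] by blast+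
      then show False using Suc.prems by simp
    qed
    have "x * x ^ k < y * x ^ k" using mult_mono_r[OF xy, of "x ^ k"] ne by (simp add: order_less_le)
    also have "\<dots> \<le> y * y ^ k" using a by (rule mult_mono_l)
    finally show ?thesis by simp
  qed
qed


lemma power_le_iff: "0 < k \<Longrightarrow> (x::'a::idem_semifield) ^ k \<le> y ^ k \<longleftrightarrow> x \<le> y"
proof
  assume k: "0 < k" and h: "x ^ k \<le> y ^ k"
  show "x \<le> y"
  proof (rule ccontr)
    assume "\<not> x \<le> y" then have "y < x" by simp
    then have "y ^ k < x ^ k" using k by (rule power_strict)
    then show False using h by simp
  qed
qed (rule power_mono')


lemma iroot_pow: "0 < k \<Longrightarrow> iroot k (a::'a::idem_semifield) ^ k = a"
proof -
  assume k: "0 < k"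
  obtain x where x: "x ^ k = a" using idem_semifield_class.alg_complete[OF k, of a] by blast
  have u: "y = x" if "y ^ k = a" for y
  proof -
    have "y ^ k \<le> x ^ k" using that x by simp
    then have "y \<le> x" using power_le_iff[OF k, of y x] by blast
    moreover have "x ^ k \<le> y ^ k" using that x by simp
    then have "x \<le> y" using power_le_iff[OF k, of x y] by blast
    ultimately show ?thesis by (rule antisym)
  qed
  have "(THE x. x ^ k = a) = x" using x u by (rule the_equality)
  then show ?thesis unfolding iroot_def using x by simp
qed


lemma iroot_le: "0 < k \<Longrightarrow> iroot k (a::'a::idem_semifield) \<le> t \<longleftrightarrow> a \<le> t ^ k"
  using power_le_iff[of k "iroot k a" t] iroot_pow[of k a] by simp

lemma sum_nz: "finite S \<Longrightarrow> s \<in> S \<Longrightarrow> (f s::'a::idem_semifield) \<noteq> 0 \<Longrightarrow> sum f S \<noteq> 0"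
  using member_le_sum' le_zero_iff' by metis

lemma prod_mono': "(\<And>q. q \<in> S \<Longrightarrow> (f q::'a::idem_semifield) \<le> g q) \<Longrightarrow> prod f S \<le> prod g S"
proof (induction S rule: infinite_finite_induct)
  case (insert x F) then show ?case by (simp add: mult_mono2)
qed auto

lemma prod_nz: "(\<And>q. q \<in> S \<Longrightarrow> (f q::'a::idem_semifield) \<noteq> 0) \<Longrightarrow> prod f S \<noteq> 0"
proof (induction S rule: infinite_finite_induct)
  case (insert x F) then show ?case by (simp add: nz_mult)
qed auto

definition phi :: "('a::idem_semifield, 'n::finite) mat \<Rightarrow> ('a, 'n) vect \<Rightarrow> 'a" where
  "phi M x = (\<Sum>i\<in>UNIV. \<Sum>j\<in>UNIV. vconj x i * M i j * x j)"

lemma vconj_reg: "regular x \<Longrightarrow> vconj x i = inverse (x i)"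
  by (simp add: regular_def vconj_def)

lemma dist_eq:
  fixes A :: "('a::idem_semifield, 'n::finite) mat"
  assumes x: "regular x" and r: "mconj A = A"
  shows "dist_mat A (outer_conj x) = phi A x"
proof -
  have nz: "\<And>i. x i \<noteq> 0" using x by (simp add: regular_def)
  have m1: "mconj (outer_conj x) = (\<lambda>i j. x i * inverse (x j))"
  proof (intro ext)
    fix i j
    have "x j * inverse (x i) \<noteq> 0" using nz by (simp add: nz_mult inverse_nz)
    moreover have "inverse (x j * inverse (x i)) = inverse (x j) * x i"
      using nz by (simp add: inverse_mult inverse_nz inverse_inverse')
    ultimately show "mconj (outer_conj x) i j = x i * inverse (x j)"
      by (simp add: mconj_def outer_conj_def vconj_reg[OF x] mult.commute)
  qed
  have t1: "trace (mmult (mconj (outer_conj x)) A) = phi A x"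
  proof -
    have "trace (mmult (mconj (outer_conj x)) A) = (\<Sum>i\<in>UNIV. \<Sum>k\<in>UNIV. x i * inverse (x k) * A k i)"
      by (simp add: trace_def mmult_def m1)
    also have "\<dots> = (\<Sum>k\<in>UNIV. \<Sum>i\<in>UNIV. x i * inverse (x k) * A k i)"
      by (rule sum.swap)
    also have "\<dots> = phi A x"
      by (simp add: phi_def vconj_reg[OF x] ac_simps)
    finally show ?thesis .
  qed
  have t2: "trace (mmult (mconj A) (outer_conj x)) = phi A x"
    by (simp add: r trace_def mmult_def outer_conj_def phi_def vconj_reg[OF x] ac_simps)
  show ?thesis unfolding dist_mat_def t1 t2 by (rule idem_semifield_class.add_idem)
qed

lemma phi_sum:
  fixes A :: "nat \<Rightarrow> ('a::idem_semifield, 'n::finite) mat"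
  shows "(\<Sum>l<m. phi (A l) x) = phi (\<lambda>i j. \<Sum>l<m. A l i j) x"
proof -
  have "(\<Sum>l<m. phi (A l) x) = (\<Sum>l<m. \<Sum>i\<in>UNIV. \<Sum>j\<in>UNIV. vconj x i * A l i j * x j)"
    by (simp add: phi_def)
  also have "\<dots> = (\<Sum>i\<in>UNIV. \<Sum>l<m. \<Sum>j\<in>UNIV. vconj x i * A l i j * x j)"
    by (rule sum.swap)
  also have "\<dots> = (\<Sum>i\<in>UNIV. \<Sum>j\<in>UNIV. \<Sum>l<m. vconj x i * A l i j * x j)"
    by (rule sum.cong[OF refl], rule sum.swap)
  also have "\<dots> = phi (\<lambda>i j. \<Sum>l<m. A l i j) x"
    by (simp add: phi_def sum_distrib_left sum_distrib_right)
  finally show ?thesis .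
qed

lemma phi_le:
  fixes M :: "('a::idem_semifield, 'n::finite) mat"
  assumes x: "regular x"
  shows "phi M x \<le> t \<longleftrightarrow> (\<forall>i j. M i j * x j \<le> t * x i)"
proof -
  have nz: "\<And>i. x i \<noteq> 0" using x by (simp add: regular_def)
  have e: "inverse (x i) * M i j * x j \<le> t \<longleftrightarrow> M i j * x j \<le> t * x i" for i j
  proof -
    have "inverse (x i) * M i j * x j \<le> t \<longleftrightarrow> x i * (inverse (x i) * M i j * x j) \<le> x i * t"
      using mult_le_cancel[OF nz[of i]] by simp
    also have "x i * (inverse (x i) * M i j * x j) = M i j * x j"
      using idem_semifield_class.mult_inverse_nz[OF nz[of i]]
      by (simp add: mult.assoc[symmetric])
    finally show ?thesis by (simp add: mult.commute)
  qed
  show ?thesis unfolding phi_def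
    by (simp add: sum_le_iff vconj_reg[OF x] e)
qed

definition cycprod :: "('a::idem_semifield, 'n::finite) mat \<Rightarrow> 'n list \<Rightarrow> nat \<Rightarrow> 'a" where
  "cycprod M cs k = (\<Prod>j<k. M (cs ! j) (cs ! ((j + 1) mod k)))"

lemma prod_rot: "0 < (k::nat) \<Longrightarrow> (\<Prod>q<k. g ((q + 1) mod k)) = (\<Prod>q<k. (g q :: 'a::comm_monoid_mult))"
proof -
  assume "0 < k"
  then obtain k' where k: "k = Suc k'" by (cases k) auto
  have "(\<Prod>q<Suc k'. g ((q + 1) mod Suc k')) = (\<Prod>q<k'. g ((q + 1) mod Suc k')) * g 0"
    by (simp add: prod.lessThan_Suc)
  also have "(\<Prod>q<k'. g ((q + 1) mod Suc k')) = (\<Prod>q<k'. g (Suc q))"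
    by (rule prod.cong) auto
  also have "(\<Prod>q<k'. g (Suc q)) * g 0 = (\<Prod>q<Suc k'. g q)"
    by (metis prod.lessThan_Suc_shift mult.commute)
  finally show ?thesis using k by simp
qed

lemma cyc_bound:
  fixes M :: "('a::idem_semifield, 'n::finite) mat"
  assumes x: "regular x" and h: "\<And>i j. M i j * x j \<le> t * x i" and k: "0 < k"
  shows "cycprod M cs k \<le> t ^ k"
proof -
  have nz: "\<And>i. x i \<noteq> 0" using x by (simp add: regular_def)
  define X where "X = (\<Prod>q<k. x (cs ! q))"
  have Xnz: "X \<noteq> 0" unfolding X_def by (rule prod_nz) (simp add: nz)
  have "cycprod M cs k * X = cycprod M cs k * (\<Prod>q<k. x (cs ! ((q + 1) mod k)))"
    unfolding X_def using prod_rot[OF k, of "\<lambda>q. x (cs ! q)"] by simp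
  also have "\<dots> = (\<Prod>q<k. M (cs ! q) (cs ! ((q + 1) mod k)) * x (cs ! ((q + 1) mod k)))"
    by (simp add: cycprod_def prod.distrib)
  also have "\<dots> \<le> (\<Prod>q<k. t * x (cs ! q))"
    by (rule prod_mono') (rule h)
  also have "\<dots> = t ^ k * X"
    by (simp add: X_def prod.distrib)
  finally have "X * cycprod M cs k \<le> X * t ^ k" by (simp add: mult.commute)
  then show ?thesis using mult_le_cancel[OF Xnz] by blast
qed

lemma finite_len: "finite {cs :: ('n::finite) list. length cs = k}"
  using finite_lists_length_eq[of "UNIV :: 'n set" k] by simp

lemma spec_rad_le_iff:
  fixes M :: "('a::idem_semifield, 'n::finite) mat"
  shows "spec_rad M \<le> t \<longleftrightarrow>
    (\<forall>k\<in>{1..card (UNIV :: 'n set)}. \<forall>cs :: 'n list. length cs = k \<longrightarrow> cycprod M cs k \<le> t ^ k)"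
proof -
  have "spec_rad M \<le> t \<longleftrightarrow> (\<forall>k\<in>{1..card (UNIV :: 'n set)}. \<forall>cs \<in> {cs :: 'n list. length cs = k}.
      iroot k (cycprod M cs k) \<le> t)"
    unfolding spec_rad_def cycprod_def by (simp add: sum_le_iff finite_len)
  also have "\<dots> \<longleftrightarrow> (\<forall>k\<in>{1..card (UNIV :: 'n set)}. \<forall>cs :: 'n list. length cs = k \<longrightarrow> cycprod M cs k \<le> t ^ k)"
    by (auto simp: iroot_le)
  finally show ?thesis .
qed

lemma cyc_le_spec:
  fixes M :: "('a::idem_semifield, 'n::finite) mat"
  assumes "k \<in> {1..card (UNIV :: 'n set)}" "length cs = k"
  shows "cycprod M cs k \<le> spec_rad M ^ k"
  using spec_rad_le_iff[of M "spec_rad M"] assms by auto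

lemma spec_rad_lower:
  fixes M :: "('a::idem_semifield, 'n::finite) mat"
  assumes x: "regular x"
  shows "spec_rad M \<le> phi M x"
proof -
  have h: "\<And>i j. M i j * x j \<le> phi M x * x i" using phi_le[OF x, of M "phi M x"] by simp
  show ?thesis unfolding spec_rad_le_iff
    using cyc_bound[OF x h] by auto
qed

definition wt :: "('a::idem_semifield, 'n::finite) mat \<Rightarrow> (nat \<Rightarrow> 'n) \<Rightarrow> nat \<Rightarrow> nat \<Rightarrow> 'a" where
  "wt M w a b = (\<Prod>q\<in>{a..<b}. M (w q) (w (Suc q)))"

lemma mpow_attained:
  fixes M :: "('a::idem_semifield, 'n::finite) mat"
  shows "mpow M p i j = 0 \<or> (\<exists>w. w 0 = i \<and> w p = j \<and> mpow M p i j = wt M w 0 p)"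
proof (induction p arbitrary: j)
  case 0
  show ?case
  proof (cases "i = j")
    case True
    then show ?thesis by (intro disjI2 exI[of _ "\<lambda>_. i"]) (simp add: idm_def wt_def)
  qed (simp add: idm_def)
next
  case (Suc p)
  have "\<exists>k\<in>UNIV. mpow M (Suc p) i j = mpow M p i k * M k j"
    unfolding mpow.simps mmult_def by (rule sum_attained) auto
  then obtain k where k: "mpow M (Suc p) i j = mpow M p i k * M k j" by blast
  from Suc.IH[of k] show ?case
  proof
    assume "mpow M p i k = 0" then show ?thesis using k by simp
  next
    assume "\<exists>w. w 0 = i \<and> w p = k \<and> mpow M p i k = wt M w 0 p"
    then obtain w where w: "w 0 = i" "w p = k" "mpow M p i k = wt M w 0 p" by blast
    define w' where "w' = w(Suc p := j)"
    have "wt M w' 0 (Suc p) = wt M w' 0 p * M (w' p) (w' (Suc p))"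
      by (simp add: wt_def)
    also have "wt M w' 0 p = wt M w 0 p"
      unfolding wt_def w'_def by (rule prod.cong) auto
    also have "M (w' p) (w' (Suc p)) = M k j" using w by (simp add: w'_def)
    finally have eq: "wt M w' 0 (Suc p) = wt M w 0 p * M k j" .
    have "mpow M (Suc p) i j = wt M w' 0 (Suc p)" by (simp only: k w(3) eq)
    moreover have "w' 0 = i" "w' (Suc p) = j" using w by (simp_all add: w'_def)
    ultimately show ?thesis by blast
  qed
qed

lemma mpow_ge:
  fixes M :: "('a::idem_semifield, 'n::finite) mat"
  shows "wt M w 0 p \<le> mpow M p (w 0) (w p)"
proof (induction p)
  case 0 then show ?case by (simp add: wt_def idm_def)
next
  case (Suc p)
  have "wt M w 0 (Suc p) = wt M w 0 p * M (w p) (w (Suc p))" by (simp add: wt_def)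
  also have "\<dots> \<le> mpow M p (w 0) (w p) * M (w p) (w (Suc p))"
    using Suc.IH by (rule mult_mono_r)
  also have "\<dots> \<le> mpow M (Suc p) (w 0) (w (Suc p))"
    unfolding mpow.simps mmult_def by (rule member_le_sum') auto
  finally show ?case .
qed

definition cyc_ok :: "('a::idem_semifield, 'n::finite) mat \<Rightarrow> bool" where
  "cyc_ok M \<longleftrightarrow> (\<forall>k\<in>{1..card (UNIV :: 'n set)}. \<forall>cs :: 'n list. length cs = k \<longrightarrow> cycprod M cs k \<le> 1)"

lemma cycle_wt:
  fixes M :: "('a::idem_semifield, 'n::finite) mat"
  assumes ok: "cyc_ok M" and e: "w a = w (a + k)" and k: "1 \<le> k" "k \<le> card (UNIV :: 'n set)"
  shows "wt M w a (a + k) \<le> 1"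
proof -
  define cs where "cs = map (\<lambda>q. w (a + q)) [0..<k]"
  have len: "length cs = k" by (simp add: cs_def)
  have "wt M w a (a + k) = (\<Prod>q\<in>{0..<k}. M (w (q + a)) (w (Suc q + a)))"
    unfolding wt_def using prod.shift_bounds_nat_ivl[of "\<lambda>q. M (w q) (w (Suc q))" 0 a k]
    by (simp add: add.commute)
  also have "\<dots> = cycprod M cs k"
    unfolding cycprod_def lessThan_atLeast0
  proof (rule prod.cong[OF refl])
    fix q assume q: "q \<in> {0..<k}"
    have "cs ! ((q + 1) mod k) = w (Suc q + a)"
    proof (cases "q + 1 < k")
      case True then show ?thesis by (simp add: cs_def add.commute)
    next
      case False then have "q + 1 = k" using q by simp
      then show ?thesis using e k by (simp add: cs_def add.commute)
    qed
    moreover have "cs ! q = w (q + a)" using q by (simp add: cs_def add.commute)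
    ultimately show "M (w (q + a)) (w (Suc q + a)) = M (cs ! q) (cs ! ((q + 1) mod k))" by simp
  qed
  also have "\<dots> \<le> 1" using ok k len by (auto simp: cyc_ok_def)
  finally show ?thesis .
qed

lemma wt_split:
  "a \<le> b \<Longrightarrow> b \<le> c \<Longrightarrow> wt M w a c = wt M w a b * (wt M w b c :: 'a::idem_semifield)"
  unfolding wt_def by (simp add: prod.atLeastLessThan_concat)

lemma walk_le_star:
  fixes M :: "('a::idem_semifield, 'n::finite) mat"
  assumes ok: "cyc_ok M"
  shows "wt M w 0 p \<le> kstar M (w 0) (w p)"
proof (induction p arbitrary: w rule: less_induct)
  case (less p)
  define N where "N = card (UNIV :: 'n set)"
  show ?case
  proof (cases "p < N")
    case True
    have "wt M w 0 p \<le> mpow M p (w 0) (w p)" by (rule mpow_ge)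
    also have "\<dots> \<le> kstar M (w 0) (w p)"
      unfolding kstar_def using True N_def by (intro member_le_sum') auto
    finally show ?thesis .
  next
    case False
    have "\<not> inj_on w {0..N}"
    proof
      assume "inj_on w {0..N}"
      then have "card (w ` {0..N}) = Suc N" by (simp add: card_image)
      moreover have "card (w ` {0..N}) \<le> N" unfolding N_def by (rule card_mono) auto
      ultimately show False by simp
    qed
    then obtain a b where ab: "a \<in> {0..N}" "b \<in> {0..N}" "a \<noteq> b" "w a = w b"
      unfolding inj_on_def by blast
    obtain a b where ab: "a < b" "b \<le> N" "w a = w b"
    proof (cases "a < b")
      case True then show ?thesis using that ab by auto
    next
      case False then show ?thesis using that[of b a] ab by auto
    qed
    define k where "k = b - a"
    have k: "1 \<le> k" "k \<le> N" "b = a + k" using ab by (auto simp: k_def)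
    define w' where "w' = (\<lambda>q. if q < a then w q else w (q + k))"
    have cyc: "wt M w a b \<le> 1" using cycle_wt[OF ok, of w a k] k ab N_def by simp
    have "wt M w 0 p = wt M w 0 a * wt M w a b * wt M w b p"
      using wt_split[of 0 a p M w] wt_split[of a b p M w] ab False
      by (simp add: mult.assoc)
    also have "\<dots> \<le> wt M w 0 a * 1 * wt M w b p"
      by (intro mult_mono2 order_refl cyc)
    also have "wt M w 0 a = wt M w' 0 a"
      unfolding wt_def
    proof (rule prod.cong[OF refl])
      fix q assume q: "q \<in> {0..<a}"
      have "w' (Suc q) = w (Suc q)"
      proof (cases "Suc q < a")
        case False then have "Suc q = a" using q by simp
        then show ?thesis using ab k by (simp add: w'_def)
      qed (simp add: w'_def)
      then show "M (w q) (w (Suc q)) = M (w' q) (w' (Suc q))" using q by (simp add: w'_def)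
    qed
    also have "wt M w b p = wt M w' a (p - k)"
    proof -
      have "wt M w' a (p - k) = (\<Prod>q\<in>{a..<p - k}. M (w (q + k)) (w (Suc q + k)))"
        unfolding wt_def by (rule prod.cong[OF refl]) (auto simp: w'_def)
      also have "\<dots> = (\<Prod>q\<in>{a + k..<p - k + k}. M (w q) (w (Suc q)))"
        using prod.shift_bounds_nat_ivl[of "\<lambda>q. M (w q) (w (Suc q))" a k "p - k"] by simp
      also have "\<dots> = wt M w b p" using k ab False by (simp add: wt_def)
      finally show ?thesis by simp
    qed
    also have "wt M w' 0 a * 1 * wt M w' a (p - k) = wt M w' 0 (p - k)"
      using wt_split[of 0 a "p - k" M w'] k ab False by simp
    also have "\<dots> \<le> kstar M (w' 0) (w' (p - k))"
      using less.IH[of "p - k" w'] k False by simp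
    also have "w' 0 = w 0"
      using ab k by (cases "a = 0") (auto simp: w'_def)
    also have "w' (p - k) = w p"
    proof -
      have "a \<le> p - k" using ab k False by arith
      then show ?thesis using k ab False by (simp add: w'_def)
    qed
    finally show ?thesis .
  qed
qed

lemma prepend_le:
  fixes M :: "('a::idem_semifield, 'n::finite) mat"
  assumes ok: "cyc_ok M"
  shows "M i l * mpow M p l k \<le> kstar M i k"
  using mpow_attained[of M p l k]
proof
  assume "mpow M p l k = 0" then show ?thesis by (simp add: zero_least)
next
  assume "\<exists>w. w 0 = l \<and> w p = k \<and> mpow M p l k = wt M w 0 p"
  then obtain w where w: "w 0 = l" "w p = k" "mpow M p l k = wt M w 0 p" by blast
  define w' where "w' = (\<lambda>q. if q = 0 then i else w (q - 1))"
  have "wt M w' 0 (Suc p) = M (w' 0) (w' 1) * (\<Prod>q\<in>{0..<p}. M (w' (Suc q)) (w' (Suc (Suc q))))"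
    unfolding wt_def by (subst prod.atLeast0_lessThan_Suc_shift) simp
  also have "\<dots> = M i l * wt M w 0 p" using w by (simp add: w'_def wt_def)
  finally have "M i l * mpow M p l k = wt M w' 0 (Suc p)" using w by simp
  also have "\<dots> \<le> kstar M (w' 0) (w' (Suc p))" by (rule walk_le_star[OF ok])
  also have "\<dots> = kstar M i k" using w by (simp add: w'_def)
  finally show ?thesis .
qed

lemma kstar_fix:
  fixes M :: "('a::idem_semifield, 'n::finite) mat"
  assumes ok: "cyc_ok M"
  shows "mvmult M (mvmult (kstar M) u) i \<le> mvmult (kstar M) u i"
proof -
  let ?x = "mvmult (kstar M) u"
  have "M i l * ?x l \<le> ?x i" for l
  proof -
    have "M i l * ?x l = (\<Sum>k\<in>UNIV. \<Sum>p<card (UNIV :: 'n set). (M i l * mpow M p l k) * u k)"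
      by (simp add: mvmult_def kstar_def sum_distrib_left sum_distrib_right mult.assoc)
    also have "\<dots> \<le> ?x i"
    proof -
      have "(M i l * mpow M p l k) * u k \<le> ?x i" for k p
      proof -
      have "(M i l * mpow M p l k) * u k \<le> kstar M i k * u k"
        by (rule mult_mono_r) (rule prepend_le[OF ok])
      also have "\<dots> \<le> ?x i" unfolding mvmult_def by (rule member_le_sum') auto
      finally show "(M i l * mpow M p l k) * u k \<le> ?x i" .
      qed
      then show ?thesis by (simp add: sum_le_iff)
    qed
    finally show ?thesis .
  qed
  then show ?thesis unfolding mvmult_def[of M] by (simp add: sum_le_iff)
qed

lemma kstar_regular:
  fixes M :: "('a::idem_semifield, 'n::finite) mat"
  assumes M: "\<And>i j. M i j \<noteq> 0" and u: "u \<noteq> (\<lambda>_. 0)"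
  shows "regular (mvmult (kstar M) u)"
proof -
  obtain k where uk: "u k \<noteq> 0" using u by auto
  have "kstar M i k \<noteq> 0" for i
  proof (cases "i = k")
    case True
    have "wt M (\<lambda>_. i) 0 0 \<le> mpow M 0 i i" using mpow_ge[of M "\<lambda>_. i" 0] by simp
    moreover have "wt M (\<lambda>_. i) 0 0 = 1" by (simp add: wt_def)
    moreover have "mpow M 0 i i \<le> kstar M i i" unfolding kstar_def
      by (rule member_le_sum') (auto simp: card_gt_0_iff)
    ultimately show ?thesis using True by (metis le_zero_iff' order_trans zero_neq_one)
  next
    case False
    define w where "w = (\<lambda>q::nat. if q = 0 then i else k)"
    have "wt M w 0 1 \<le> mpow M 1 i k" using mpow_ge[of M w 1] by (simp add: w_def)
    moreover have "wt M w 0 1 = M i k" by (simp add: wt_def w_def)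
    moreover have "card {i, k} \<le> card (UNIV :: 'n set)" by (rule card_mono) auto
    then have "1 < card (UNIV :: 'n set)" using False by simp
    then have "mpow M 1 i k \<le> kstar M i k" unfolding kstar_def
      by (intro member_le_sum') auto
    ultimately show ?thesis using M[of i k] by (metis le_zero_iff' order_trans)
  qed
  then show ?thesis unfolding regular_def mvmult_def
    by (intro allI sum_nz[of UNIV k]) (auto simp: nz_mult uk)
qed

lemma fix_kstar:
  fixes M :: "('a::idem_semifield, 'n::finite) mat"
  assumes h: "\<And>i. mvmult M x i \<le> x i"
  shows "mvmult (kstar M) x = x"
proof -
  have pw: "mpow M p i k * x k \<le> x i" for p i k
  proof (induction p arbitrary: k)
    case 0 then show ?case by (simp add: idm_def zero_least)
  next
    case (Suc p)
    have "mpow M (Suc p) i k * x k = (\<Sum>l\<in>UNIV. mpow M p i l * (M l k * x k))"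
      by (simp add: mmult_def sum_distrib_right mult.assoc)
    also have "\<dots> \<le> x i"
    proof -
      have "mpow M p i l * (M l k * x k) \<le> x i" for l
      proof -
      have "M l k * x k \<le> mvmult M x l" unfolding mvmult_def by (rule member_le_sum') auto
      also have "\<dots> \<le> x l" by (rule h)
      finally have "mpow M p i l * (M l k * x k) \<le> mpow M p i l * x l" by (rule mult_mono_l)
      also have "\<dots> \<le> x i" by (rule Suc.IH)
      finally show "mpow M p i l * (M l k * x k) \<le> x i" .
      qed
      then show ?thesis by (simp add: sum_le_iff)
    qed
    finally show ?case .
  qed
  show ?thesis
  proof (rule ext, rule antisym)
    fix i
    show "mvmult (kstar M) x i \<le> x i"
      unfolding mvmult_def kstar_def by (simp add: sum_le_iff sum_distrib_right pw)
    have "1 \<le> kstar M i i" unfolding kstar_def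
      using member_le_sum'[of "{..<card (UNIV :: 'n set)}" 0 "\<lambda>p. mpow M p i i"]
      by (simp add: idm_def card_gt_0_iff)
    then have "1 * x i \<le> kstar M i i * x i" by (rule mult_mono_r)
    also have "\<dots> \<le> mvmult (kstar M) x i" unfolding mvmult_def by (rule member_le_sum') auto
    finally show "x i \<le> mvmult (kstar M) x i" by simp
  qed
qed

theorem corollary2:
  fixes A :: "nat \<Rightarrow> ('a::idem_semifield, 'n::finite) mat" and m :: nat
  defines "B \<equiv> (\<lambda>i j. \<Sum>l<m. A l i j)"
  defines "\<mu> \<equiv> spec_rad B"
  defines "F \<equiv> (\<lambda>x. \<Sum>l<m. dist_mat (A l) (outer_conj x))"
  assumes recip: "\<And>l. l < m \<Longrightarrow> mconj (A l) = A l"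
    and B_pos: "\<And>i j. B i j \<noteq> 0"
  shows "(\<forall>x. regular x \<longrightarrow> \<mu> \<le> F x)
    \<and> (\<exists>x. regular x \<and> F x = \<mu>)
    \<and> {x. regular x \<and> F x = \<mu>} =
        {mvmult (kstar (smult (inverse \<mu>) B)) u | u. u \<noteq> (\<lambda>_. 0)}"
proof -
  define C where "C = smult (inverse \<mu>) B"
  have N1: "1 \<in> {1..card (UNIV :: 'n set)}" by (simp add: card_gt_0_iff Suc_le_eq)
  obtain i0 :: 'n where True by blast
  have "cycprod B [i0] 1 \<le> spec_rad B ^ 1" by (rule cyc_le_spec[OF N1]) simp
  then have "B i0 i0 \<le> \<mu>" by (simp add: cycprod_def \<mu>_def)
  then have mu0: "\<mu> \<noteq> 0"
  proof (intro notI)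
    assume "B i0 i0 \<le> \<mu>" "\<mu> = 0"
    then have "B i0 i0 \<le> 0" by simp
    then have "B i0 i0 = 0" by (rule le_zero_iff'[THEN iffD1])
    then show False using B_pos by blast
  qed
  have Fx: "F x = phi B x" if x: "regular x" for x
  proof -
    have "F x = (\<Sum>l<m. phi (A l) x)"
      unfolding F_def by (rule sum.cong[OF refl]) (simp add: dist_eq[OF x] recip)
    also have "\<dots> = phi B x" unfolding B_def by (rule phi_sum)
    finally show ?thesis .
  qed
  have lower: "\<mu> \<le> F x" if x: "regular x" for x
    using spec_rad_lower[OF x, of B] Fx[OF x] by (simp add: \<mu>_def)
  have okC: "cyc_ok C" unfolding cyc_ok_def
  proof (intro ballI allI impI)
    fix k and cs :: "'n list"
    assume k: "k \<in> {1..card (UNIV :: 'n set)}" and len: "length cs = k"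
    have "cycprod C cs k = inverse \<mu> ^ k * cycprod B cs k"
      by (simp add: cycprod_def C_def smult_def prod.distrib)
    also have "\<dots> \<le> inverse \<mu> ^ k * \<mu> ^ k"
      using cyc_le_spec[OF k len, of B] by (intro mult_mono_l) (simp add: \<mu>_def)
    also have "\<dots> = (inverse \<mu> * \<mu>) ^ k" by (simp add: power_mult_distrib)
    also have "\<dots> = 1" using inv_mult_nz[OF mu0] by simp
    finally show "cycprod C cs k \<le> 1" .
  qed
  have Cnz: "C i j \<noteq> 0" for i j
    unfolding C_def smult_def using B_pos mu0 by (simp add: nz_mult inverse_nz)
  have key: "F x \<le> \<mu> \<longleftrightarrow> (\<forall>i. mvmult C x i \<le> x i)" if x: "regular x" for x
  proof -
    have e: "inverse \<mu> * B i j * x j \<le> x i \<longleftrightarrow> B i j * x j \<le> \<mu> * x i" for i j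
    proof -
      have "inverse \<mu> * B i j * x j \<le> x i \<longleftrightarrow> \<mu> * (inverse \<mu> * B i j * x j) \<le> \<mu> * x i"
        using mult_le_cancel[OF mu0] by simp
      also have "\<mu> * (inverse \<mu> * B i j * x j) = B i j * x j"
        using idem_semifield_class.mult_inverse_nz[OF mu0] by (simp add: mult.assoc[symmetric])
      finally show ?thesis .
    qed
    show ?thesis unfolding Fx[OF x] phi_le[OF x] mvmult_def C_def smult_def
      by (simp add: sum_le_iff e)
  qed
  have S: "{x. regular x \<and> F x = \<mu>} = {mvmult (kstar C) u | u. u \<noteq> (\<lambda>_. 0)}"
  proof (intro set_eqI iffI)
    fix x assume "x \<in> {x. regular x \<and> F x = \<mu>}"
    then have x: "regular x" "F x = \<mu>" by auto
    then have "\<forall>i. mvmult C x i \<le> x i" using key[OF x(1)] by simp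
    then have "mvmult (kstar C) x = x" using fix_kstar by blast
    moreover have "x \<noteq> (\<lambda>_. 0)" using x(1) by (auto simp: regular_def)
    ultimately show "x \<in> {mvmult (kstar C) u | u. u \<noteq> (\<lambda>_. 0)}" by force
  next
    fix x assume "x \<in> {mvmult (kstar C) u | u. u \<noteq> (\<lambda>_. 0)}"
    then obtain u where u: "u \<noteq> (\<lambda>_. 0)" "x = mvmult (kstar C) u" by blast
    have r: "regular x" using kstar_regular[OF Cnz u(1)] u(2) by simp
    have "\<forall>i. mvmult C x i \<le> x i" using kstar_fix[OF okC] u(2) by simp
    then have "F x \<le> \<mu>" using key[OF r] by simp
    then have "F x = \<mu>" using lower[OF r] by simp
    then show "x \<in> {x. regular x \<and> F x = \<mu>}" using r by simp
  qed
  have ex: "\<exists>x. regular x \<and> F x = \<mu>"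
  proof -
    have "mvmult (kstar C) (\<lambda>_. 1) \<in> {mvmult (kstar C) u | u. u \<noteq> (\<lambda>_. 0)}"
      by (auto simp: fun_eq_iff)
    then show ?thesis using S by blast
  qed
  show ?thesis using lower ex S by (simp add: C_def)
qed

end
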